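(* Let $Y$, $X$ be real random variables and $\boldsymbol{Z}=(Z_1,\ldots,Z_{k_z})^T$ a random $k_z$-vector, with finite second moments and known joint distribution, satisfying $$Y=X\beta+\boldsymbol{Z}^T\boldsymbol{\gamma}+U,\qquad \operatorname{cov}(\boldsymbol{Z},U)=\boldsymbol{\alpha},$$ where $\beta\in\mathbb{R}$ is unknown, $\boldsymbol{\gamma},\boldsymbol{\alpha}\in\mathbb{R}^{k_z}$ are unknown and $U$ is an unobserved random variable. Assume: (1) (relevance) $\operatorname{cov}(\boldsymbol{Z},X)\neq\boldsymbol{0}$; (2) (sufficient variation) $\boldsymbol{\Sigma}_z:=\operatorname{var}(\boldsymbol{Z})$ is invertible; (3) (invalid instruments) $\gamma_\ell\alpha_\ell=0$ for every $\ell\in\{1,\ldots,k_z\}$; (4) (general partial exogeneity and exclusion) there are known constants $\tilde\delta_j\geq 0$, $j=1,\ldots,s_{k_z}$, such that $\left|(\operatorname{var}(\tilde Z_j))^{-1}\operatorname{cov}(\tilde Z_j,\tilde U)\right|\leq\tilde\delta_j$ for all $j$, where $\tilde U:=Y-X\beta=\boldsymbol{Z}^T\boldsymbol{\gamma}+U$ and $\tilde Z_j$ are the transformed instruments defined in the context. Then: (i) The falsification adaptive set is $$FAS=\left[\min_{j\in\tilde{\mathcal{L}}_{rel}}\frac{\tilde\psi_j}{\tilde\pi_j},\ \max_{j\in\tilde{\mathcal{L}}_{rel}}\frac{\tilde\psi_j}{\tilde\pi_j}\right],$$ where $\tilde{\mathcal{L}}_{rel}=\{j\in\{1,\ldots,s_{k_z}\}:\tilde\pi_j\neq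 0\}$ and $s_{k_z}=k_z2^{k_z-1}$ is the number of all just-identified IV model specifications. (ii) If there is at least one instrument that is relevant and valid, then $\beta\in FAS$, so that $FAS$ is the identified set for $\beta$.
   Context: Transformed just-identifying instruments: for $\ell\in\{1,\ldots,k_z\}$ let $A_{-\ell}=\{1,\ldots,k_z\}\setminus\{\ell\}$ and let $C$ range over all $2^{k_z-1}$ subsets of $A_{-\ell}$ (including $\emptyset$ and $A_{-\ell}$). Define the population linear projection error $Z_{\ell|C}:=Z_\ell-\boldsymbol{Z}_C^T\boldsymbol{\phi}_{C\ell}$, where $\boldsymbol{\phi}_{C\ell}=(\operatorname{var}(\boldsymbol{Z}_C))^{-1}\operatorname{cov}(\boldsymbol{Z}_C,Z_\ell)$ (with $Z_{\ell|\emptyset}=Z_\ell$); it is the just-identifying instrument in the specification where $\boldsymbol{Z}_C$ are included as controls and $\boldsymbol{Z}_{A_{-\ell}\setminus C}$ are omitted. Enumerating all pairs $(\ell,C)$ gives $s_{k_z}=k_z2^{k_z-1}$ variables $\tilde Z_1,\ldots,\tilde Z_{s_{k_z}}$. Set $\tilde\pi_j=(\operatorname{var}(\tilde Z_j))^{-1}\operatorname{cov}(\tilde Z_j,X)$ and $\tilde\psi_j=(\operatorname{var}(\tilde Z_j))^{-1}\operatorname{cov}(\tilde Z_j,Y)$; $\tilde Z_j$ is called relevant if $\tilde\pi_j\neq0$. Identified set: for $\tilde{\boldsymbol{\delta}}\in\mathbb{R}^{s_{k_z}}_{\geq0}$, $\mathcal{B}(\tilde{\boldsymbol{\delta}})=\{b\in\mathbb{R}:-\tilde{\boldsymbol{\delta}}\leq\tilde{\boldsymbol{\psi}}-\tilde{\boldsymbol{\pi}}b\leq\tilde{\boldsymbol{\delta}}\}$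 (componentwise). The falsification frontier $FF$ is the set of $\tilde{\boldsymbol{\delta}}\geq0$ with $\mathcal{B}(\tilde{\boldsymbol{\delta}})\neq\emptyset$ but $\mathcal{B}(\tilde{\boldsymbol{\delta}}')=\emptyset$ for every $\tilde{\boldsymbol{\delta}}'<\tilde{\boldsymbol{\delta}}$, where $\tilde{\boldsymbol{\delta}}'<\tilde{\boldsymbol{\delta}}$ means $\tilde\delta'_j\leq\tilde\delta_j$ for all $j$ with strict inequality for some $j$. The falsification adaptive set is $FAS=\bigcup_{\tilde{\boldsymbol{\delta}}\in FF}\mathcal{B}(\tilde{\boldsymbol{\delta}})$. An instrument $Z_\ell$ is valid if $\alpha_\ell=\gamma_\ell=0$. A valid instrument $Z_\ell$ is relevant here if its associated transformed just-identifying instrument $Z_{\ell|C}$, with $C=\{r\neq\ell:\gamma_r\neq0\}$ (the instruments violating exclusion included as controls and those violating exogeneity omitted), satisfies $\operatorname{cov}(Z_{\ell|C},X)\neq 0$. *)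

theory Defs
  imports "HOL-Probability.Probability"
begin

definition covar :: "'a measure \<Rightarrow> ('a \<Rightarrow> real) \<Rightarrow> ('a \<Rightarrow> real) \<Rightarrow> real" where
  "covar M V W = (\<integral>\<omega>. (V \<omega> - (\<integral>\<omega>'. V \<omega>' \<partial>M)) * (W \<omega> - (\<integral>\<omega>'. W \<omega>' \<partial>M)) \<partial>M)"

definition var :: "'a measure \<Rightarrow> ('a \<Rightarrow> real) \<Rightarrow> real" where
  "var M V = covar M V V"

definition finite_second_moment :: "'a measure \<Rightarrow> ('a \<Rightarrow> real) \<Rightarrow> bool" where
  "finite_second_moment M V \<longleftrightarrow> V \<in> borel_measurable M \<and> integrable M (\<lambda>\<omega>. (V \<omega>)\<^sup>2)"

text \<open>Population projection coefficient phi_{C l} = var(Z_C)^{-1} cov(Z_C, Z_l), i.e. the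
  solution of the normal equations var(Z_C) phi = cov(Z_C, Z_l) (zero outside C).\<close>
definition proj_coef :: "'a measure \<Rightarrow> ('k \<Rightarrow> 'a \<Rightarrow> real) \<Rightarrow> 'k set \<Rightarrow> 'k \<Rightarrow> ('k \<Rightarrow> real)" where
  "proj_coef M Z C l = (THE c. (\<forall>r\<in>C. (\<Sum>s\<in>C. covar M (Z r) (Z s) * c s) = covar M (Z r) (Z l))
                             \<and> (\<forall>s. s \<notin> C \<longrightarrow> c s = 0))"

definition Ztilde :: "'a measure \<Rightarrow> ('k \<Rightarrow> 'a \<Rightarrow> real) \<Rightarrow> 'k \<times> 'k set \<Rightarrow> 'a \<Rightarrow> real" where
  "Ztilde M Z lC \<omega> = Z (fst lC) \<omega> - (\<Sum>s\<in>snd lC. Z s \<omega> * proj_coef M Z (snd lC) (fst lC) s)"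

definition spec_index :: "('k::finite \<times> 'k set) set" where
  "spec_index = {(l, C). C \<subseteq> UNIV - {l}}"

definition pi_t :: "'a measure \<Rightarrow> ('k \<Rightarrow> 'a \<Rightarrow> real) \<Rightarrow> ('a \<Rightarrow> real) \<Rightarrow> 'k \<times> 'k set \<Rightarrow> real" where
  "pi_t M Z X j = covar M (Ztilde M Z j) X / var M (Ztilde M Z j)"

definition psi_t :: "'a measure \<Rightarrow> ('k \<Rightarrow> 'a \<Rightarrow> real) \<Rightarrow> ('a \<Rightarrow> real) \<Rightarrow> 'k \<times> 'k set \<Rightarrow> real" where
  "psi_t M Z Y j = covar M (Ztilde M Z j) Y / var M (Ztilde M Z j)"

definition idset :: "'j set \<Rightarrow> ('j \<Rightarrow> real) \<Rightarrow> ('j \<Rightarrow> real) \<Rightarrow> ('j \<Rightarrow> real) \<Rightarrow> real set" where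
  "idset J p q \<delta> = {b. \<forall>j\<in>J. - \<delta> j \<le> q j - p j * b \<and> q j - p j * b \<le> \<delta> j}"

definition fal_frontier :: "'j set \<Rightarrow> ('j \<Rightarrow> real) \<Rightarrow> ('j \<Rightarrow> real) \<Rightarrow> ('j \<Rightarrow> real) set" where
  "fal_frontier J p q = {\<delta>. (\<forall>j\<in>J. 0 \<le> \<delta> j) \<and> (\<forall>j. j \<notin> J \<longrightarrow> \<delta> j = 0)
      \<and> idset J p q \<delta> \<noteq> {}
      \<and> (\<forall>\<delta>'. (\<forall>j\<in>J. 0 \<le> \<delta>' j) \<and> (\<forall>j\<in>J. \<delta>' j \<le> \<delta> j) \<and> (\<exists>j\<in>J. \<delta>' j < \<delta> j)
              \<longrightarrow> idset J p q \<delta>' = {})}"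

definition FAS :: "'j set \<Rightarrow> ('j \<Rightarrow> real) \<Rightarrow> ('j \<Rightarrow> real) \<Rightarrow> real set" where
  "FAS J p q = (\<Union>\<delta>\<in>fal_frontier J p q. idset J p q \<delta>)"

end

theory Submission
  imports Defs
begin

context prob_space
begin

lemma fsm_meas[measurable_dest]: "finite_second_moment M V \<Longrightarrow> V \<in> borel_measurable M"
  by (simp add: finite_second_moment_def)

lemma fsm_sq: "finite_second_moment M V \<Longrightarrow> integrable M (\<lambda>\<omega>. (V \<omega>)\<^sup>2)"
  by (simp add: finite_second_moment_def)

lemma fsm_integrable:
  assumes "finite_second_moment M V" shows "integrable M V"
proof (rule Bochner_Integration.integrable_bound[where f="\<lambda>\<omega>. 1 + (V \<omega>)\<^sup>2"])
  show "integrable M (\<lambda>\<omega>. 1 + (V \<omega>)\<^sup>2)" using fsm_sq[OF assms] by simp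
  show "V \<in> borel_measurable M" using assms by (simp add: finite_second_moment_def)
  show "AE x in M. norm (V x) \<le> norm (1 + (V x)\<^sup>2)"
  proof (rule AE_I2)
    fix x
    have "0 \<le> (\<bar>V x\<bar> - 1)\<^sup>2" by simp
    moreover have "(\<bar>V x\<bar> - 1)\<^sup>2 = (V x)\<^sup>2 - 2 * \<bar>V x\<bar> + 1"
      by (simp add: power2_diff power2_abs)
    moreover have "0 \<le> (V x)\<^sup>2" by simp
    ultimately have "\<bar>V x\<bar> \<le> 1 + (V x)\<^sup>2" by linarith
    then show "norm (V x) \<le> norm (1 + (V x)\<^sup>2)" by simp
  qed
qed

lemma fsm_mult_integrable:
  assumes "finite_second_moment M V" "finite_second_moment M W"
  shows "integrable M (\<lambda>\<omega>. V \<omega> * W \<omega>)"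
proof (rule Bochner_Integration.integrable_bound[where f="\<lambda>\<omega>. (V \<omega>)\<^sup>2 + (W \<omega>)\<^sup>2"])
  show "integrable M (\<lambda>\<omega>. (V \<omega>)\<^sup>2 + (W \<omega>)\<^sup>2)" using fsm_sq[OF assms(1)] fsm_sq[OF assms(2)] by simp
  show "(\<lambda>\<omega>. V \<omega> * W \<omega>) \<in> borel_measurable M"
    using fsm_meas[OF assms(1)] fsm_meas[OF assms(2)] by (rule borel_measurable_times)
  show "AE x in M. norm (V x * W x) \<le> norm ((V x)\<^sup>2 + (W x)\<^sup>2)"
  proof (rule AE_I2)
    fix x
    have "0 \<le> (\<bar>V x\<bar> - \<bar>W x\<bar>)\<^sup>2" by simp
    moreover have "(\<bar>V x\<bar> - \<bar>W x\<bar>)\<^sup>2 = (V x)\<^sup>2 - 2 * \<bar>V x * W x\<bar> + (W x)\<^sup>2"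
      by (simp add: power2_diff power2_abs abs_mult)
    moreover have "0 \<le> (V x)\<^sup>2" "0 \<le> (W x)\<^sup>2" by simp_all
    ultimately have "\<bar>V x * W x\<bar> \<le> (V x)\<^sup>2 + (W x)\<^sup>2" by linarith
    then show "norm (V x * W x) \<le> norm ((V x)\<^sup>2 + (W x)\<^sup>2)" by simp
  qed
qed

lemma fsm_add: assumes "finite_second_moment M V" "finite_second_moment M W"
  shows "finite_second_moment M (\<lambda>\<omega>. V \<omega> + W \<omega>)"
proof -
  have "integrable M (\<lambda>\<omega>. 2 * (V \<omega> * W \<omega>))" using fsm_mult_integrable[OF assms] by simp
  then have "integrable M (\<lambda>\<omega>. (V \<omega>)\<^sup>2 + (W \<omega>)\<^sup>2 + 2 * V \<omega> * W \<omega>)"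
    using fsm_sq[OF assms(1)] fsm_sq[OF assms(2)] by (simp add: mult.assoc)
  then show ?thesis unfolding finite_second_moment_def power2_sum
    using fsm_meas[OF assms(1)] fsm_meas[OF assms(2)] by simp
qed

lemma fsm_cmult: "finite_second_moment M V \<Longrightarrow> finite_second_moment M (\<lambda>\<omega>. c * V \<omega>)"
  unfolding finite_second_moment_def power_mult_distrib by auto

lemma fsm_const: "finite_second_moment M (\<lambda>\<omega>. c)"
  unfolding finite_second_moment_def by auto

lemma fsm_diff: "finite_second_moment M V \<Longrightarrow> finite_second_moment M W \<Longrightarrow> finite_second_moment M (\<lambda>\<omega>. V \<omega> - W \<omega>)"
  using fsm_add[of V "\<lambda>\<omega>. (-1) * W \<omega>"] fsm_cmult[of W "-1"] by simp

lemma fsm_sum: "finite S \<Longrightarrow> (\<And>s. s \<in> S \<Longrightarrow> finite_second_moment M (f s)) \<Longrightarrow> finite_second_moment M (\<lambda>\<omega>. \<Sum>s\<in>S. f s \<omega>)"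
  by (induction S rule: finite_induct) (auto intro: fsm_add fsm_const)

lemma covar_expand:
  assumes V: "finite_second_moment M V" and W: "finite_second_moment M W"
  shows "covar M V W = (\<integral>\<omega>. V \<omega> * W \<omega> \<partial>M) - (\<integral>\<omega>. V \<omega> \<partial>M) * (\<integral>\<omega>. W \<omega> \<partial>M)"
proof -
  note iV = fsm_integrable[OF V] and iW = fsm_integrable[OF W] and iVW = fsm_mult_integrable[OF V W]
  define a where "a = (\<integral>\<omega>. V \<omega> \<partial>M)"
  define b where "b = (\<integral>\<omega>. W \<omega> \<partial>M)"
  have eq: "\<And>\<omega>. (V \<omega> - a) * (W \<omega> - b) = (V \<omega> * W \<omega> - a * W \<omega>) - (b * V \<omega> - a * b)"
    by (simp add: algebra_simps)
  have "covar M V W = (\<integral>\<omega>. (V \<omega> * W \<omega> - a * W \<omega>) - (b * V \<omega> - a * b) \<partial>M)"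
    unfolding covar_def a_def[symmetric] b_def[symmetric] eq ..
  also have "\<dots> = (\<integral>\<omega>. V \<omega> * W \<omega> \<partial>M) - a * b - (b * a - a * b)"
    using iV iW iVW by (simp add: prob_space a_def[symmetric] b_def[symmetric])
  finally show ?thesis by (simp add: a_def b_def algebra_simps)
qed

lemma covar_sym: "covar M V W = covar M W V"
  unfolding covar_def by (simp add: mult.commute)

lemma covar_cong: "(\<And>\<omega>. \<omega> \<in> space M \<Longrightarrow> W \<omega> = W' \<omega>) \<Longrightarrow> covar M V W = covar M V W'"
proof -
  assume h: "\<And>\<omega>. \<omega> \<in> space M \<Longrightarrow> W \<omega> = W' \<omega>"
  have "(\<integral>\<omega>. W \<omega> \<partial>M) = (\<integral>\<omega>. W' \<omega> \<partial>M)" using h by (rule Bochner_Integration.integral_cong[OF refl])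
  then show ?thesis unfolding covar_def using h by (intro Bochner_Integration.integral_cong) auto
qed

lemma covar_add_right:
  assumes "finite_second_moment M V" "finite_second_moment M W1" "finite_second_moment M W2"
  shows "covar M V (\<lambda>\<omega>. W1 \<omega> + W2 \<omega>) = covar M V W1 + covar M V W2"
  using assms fsm_add[OF assms(2,3)] fsm_integrable[OF assms(1)] fsm_integrable[OF assms(2)]
    fsm_integrable[OF assms(3)] fsm_mult_integrable[OF assms(1,2)] fsm_mult_integrable[OF assms(1,3)]
  by (simp add: covar_expand distrib_left algebra_simps)

lemma covar_cmult_right: "covar M V (\<lambda>\<omega>. c * W \<omega>) = c * covar M V W"
proof -
  have "\<And>\<omega>. (V \<omega> - (\<integral>\<omega>'. V \<omega>' \<partial>M)) * (c * W \<omega> - (\<integral>\<omega>'. c * W \<omega>' \<partial>M))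
        = c * ((V \<omega> - (\<integral>\<omega>'. V \<omega>' \<partial>M)) * (W \<omega> - (\<integral>\<omega>'. W \<omega>' \<partial>M)))"
    by (simp add: algebra_simps)
  then have "covar M V (\<lambda>\<omega>. c * W \<omega>) = (\<integral>\<omega>. c * ((V \<omega> - (\<integral>\<omega>'. V \<omega>' \<partial>M)) * (W \<omega> - (\<integral>\<omega>'. W \<omega>' \<partial>M))) \<partial>M)"
    unfolding covar_def by presburger
  then show ?thesis unfolding covar_def by simp
qed

lemma covar_sum_right:
  assumes "finite S" "finite_second_moment M V" "\<And>s. s \<in> S \<Longrightarrow> finite_second_moment M (f s)"
  shows "covar M V (\<lambda>\<omega>. \<Sum>s\<in>S. f s \<omega>) = (\<Sum>s\<in>S. covar M V (f s))"
  using assms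
proof (induction S rule: finite_induct)
  case empty
  then show ?case unfolding covar_def by simp
next
  case (insert x F)
  have "covar M V (\<lambda>\<omega>. \<Sum>s\<in>insert x F. f s \<omega>) = covar M V (\<lambda>\<omega>. f x \<omega> + (\<Sum>s\<in>F. f s \<omega>))"
    using insert by simp
  also have "\<dots> = covar M V (f x) + covar M V (\<lambda>\<omega>. \<Sum>s\<in>F. f s \<omega>)"
    using insert by (intro covar_add_right fsm_sum) auto
  finally show ?case using insert by simp
qed

lemma var_zero_covar:
  assumes W: "finite_second_moment M W" and V: "finite_second_moment M V" and "var M W = 0"
  shows "covar M V W = 0"
proof -
  define b where "b = (\<integral>\<omega>. W \<omega> \<partial>M)"
  have int: "integrable M (\<lambda>\<omega>. (W \<omega> - b) * (W \<omega> - b))"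
    using fsm_mult_integrable[OF fsm_diff[OF W fsm_const] fsm_diff[OF W fsm_const]] by simp
  have "(\<integral>\<omega>. (W \<omega> - b) * (W \<omega> - b) \<partial>M) = 0" using assms(3) unfolding var_def covar_def b_def .
  then have "AE \<omega> in M. (W \<omega> - b) * (W \<omega> - b) = 0"
    using integral_nonneg_eq_0_iff_AE[OF int] by simp
  then have "AE \<omega> in M. (V \<omega> - (\<integral>\<omega>'. V \<omega>' \<partial>M)) * (W \<omega> - b) = 0" by (auto elim: AE_mp)
  then have "covar M V W = (\<integral>\<omega>. 0 \<partial>M)" unfolding covar_def b_def[symmetric]
    by (intro integral_cong_AE) (use V W in auto)
  then show ?thesis by simp
qed

end

lemma abs_rel: "(p::real) \<noteq> 0 \<Longrightarrow> \<bar>q - p * b\<bar> = \<bar>p\<bar> * \<bar>b - q / p\<bar>"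
proof -
  assume "p \<noteq> 0"
  then have "q - p * b = p * (q / p - b)" by (simp add: algebra_simps)
  then show ?thesis by (simp add: abs_mult abs_minus_commute)
qed

lemma FAS_char:
  fixes J :: "'j set" and p q :: "'j \<Rightarrow> real"
  assumes fin: "finite J" and Rne: "{j\<in>J. p j \<noteq> 0} \<noteq> {}"
  shows "FAS J p q = {Min ((\<lambda>j. q j / p j) ` {j\<in>J. p j \<noteq> 0}) .. Max ((\<lambda>j. q j / p j) ` {j\<in>J. p j \<noteq> 0})}"
proof -
  define R where "R = {j\<in>J. p j \<noteq> 0}"
  define r where "r = (\<lambda>j. q j / p j)"
  define mn where "mn = Min (r ` R)"
  define mx where "mx = Max (r ` R)"
  have finR: "finite (r ` R)" using fin by (simp add: R_def)
  have neR: "r ` R \<noteq> {}" using Rne by (simp add: R_def)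
  obtain jmx where jmx: "jmx \<in> R" "r jmx = mx" using Max_in[OF finR neR] unfolding mx_def by auto
  obtain jmn where jmn: "jmn \<in> R" "r jmn = mn" using Min_in[OF finR neR] unfolding mn_def by auto
  have lemx: "\<And>j. j \<in> R \<Longrightarrow> r j \<le> mx" using Max_ge[OF finR] unfolding mx_def by auto
  have gemn: "\<And>j. j \<in> R \<Longrightarrow> mn \<le> r j" using Min_le[OF finR] unfolding mn_def by auto
  have ar: "\<And>j b. j \<in> R \<Longrightarrow> \<bar>q j - p j * b\<bar> = \<bar>p j\<bar> * \<bar>b - r j\<bar>"
    unfolding R_def r_def using abs_rel by auto
  define dl where "dl = (\<lambda>b j. if j \<in> J then \<bar>q j - p j * b\<bar> else 0)"
  have K1: "\<And>b \<delta>. b \<in> idset J p q \<delta> \<longleftrightarrow> (\<forall>j\<in>J. \<bar>q j - p j * b\<bar> \<le> \<delta> j)"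
    unfolding idset_def by (auto simp: abs_le_iff)
  have K2: "\<And>b. b \<in> idset J p q (dl b)" by (simp add: K1 dl_def)
  have K3: "dl b \<in> fal_frontier J p q" if b: "mn \<le> b" "b \<le> mx" for b
    unfolding fal_frontier_def
  proof (intro CollectI conjI)
    show "\<forall>j\<in>J. 0 \<le> dl b j" by (simp add: dl_def)
    show "\<forall>j. j \<notin> J \<longrightarrow> dl b j = 0" by (simp add: dl_def)
    show "idset J p q (dl b) \<noteq> {}" using K2 by blast
    show "\<forall>\<delta>'. (\<forall>j\<in>J. 0 \<le> \<delta>' j) \<and> (\<forall>j\<in>J. \<delta>' j \<le> dl b j) \<and> (\<exists>j\<in>J. \<delta>' j < dl b j) \<longrightarrow> idset J p q \<delta>' = {}"
    proof (intro allI impI)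
    fix \<delta>' assume h: "(\<forall>j\<in>J. 0 \<le> \<delta>' j) \<and> (\<forall>j\<in>J. \<delta>' j \<le> dl b j) \<and> (\<exists>j\<in>J. \<delta>' j < dl b j)"
    show "idset J p q \<delta>' = {}"
    proof (rule ccontr)
      assume "idset J p q \<delta>' \<noteq> {}"
      then obtain b' where "b' \<in> idset J p q \<delta>'" by blast
      then have b': "\<And>j. j \<in> J \<Longrightarrow> \<bar>q j - p j * b'\<bar> \<le> \<delta>' j" unfolding K1 by blast
      have le: "\<bar>q j - p j * b'\<bar> \<le> \<bar>q j - p j * b\<bar>" if j: "j \<in> J" for j
      proof -
        have "\<delta>' j \<le> \<bar>q j - p j * b\<bar>" using h j by (auto simp: dl_def)
        then show ?thesis using b'[OF j] by linarith
      qed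
      obtain j0 where j0': "j0 \<in> J" "\<delta>' j0 < dl b j0" using h by blast
      have j0: "\<bar>q j0 - p j0 * b'\<bar> < \<bar>q j0 - p j0 * b\<bar>"
        using j0' b'[OF j0'(1)] by (simp add: dl_def)
      consider "b' > b" | "b' < b" | "b' = b" by linarith
      then show False
      proof cases
        case 1
        have "jmn \<in> J" using jmn by (simp add: R_def)
        have "\<bar>p jmn\<bar> * \<bar>b' - r jmn\<bar> \<le> \<bar>p jmn\<bar> * \<bar>b - r jmn\<bar>" using le[OF \<open>jmn \<in> J\<close>] ar[OF jmn(1)] by simp
        moreover have "\<bar>p jmn\<bar> > 0" using jmn by (simp add: R_def)
        ultimately have "\<bar>b' - r jmn\<bar> \<le> \<bar>b - r jmn\<bar>" by simp
        then show False using 1 b jmn by linarith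
      next
        case 2
        have "jmx \<in> J" using jmx by (simp add: R_def)
        have "\<bar>p jmx\<bar> * \<bar>b' - r jmx\<bar> \<le> \<bar>p jmx\<bar> * \<bar>b - r jmx\<bar>" using le[OF \<open>jmx \<in> J\<close>] ar[OF jmx(1)] by simp
        moreover have "\<bar>p jmx\<bar> > 0" using jmx by (simp add: R_def)
        ultimately have "\<bar>b' - r jmx\<bar> \<le> \<bar>b - r jmx\<bar>" by simp
        then show False using 2 b jmx by linarith
      next
        case 3 then show False using j0 by simp
      qed
    qed
    qed
  qed
  have K4: "mn \<le> b \<and> b \<le> mx" if d: "\<delta> \<in> fal_frontier J p q" and bi: "b \<in> idset J p q \<delta>" for \<delta> b
  proof -
    have dJ: "\<And>j. j \<in> J \<Longrightarrow> \<bar>q j - p j * b\<bar> \<le> \<delta> j" using bi unfolding K1 by blast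
    have min: "\<And>\<delta>'. (\<forall>j\<in>J. 0 \<le> \<delta>' j) \<Longrightarrow> (\<forall>j\<in>J. \<delta>' j \<le> \<delta> j) \<Longrightarrow> (\<exists>j\<in>J. \<delta>' j < \<delta> j) \<Longrightarrow> idset J p q \<delta>' = {}"
      using d unfolding fal_frontier_def by blast
    have mnx: "mn \<le> mx" using gemn lemx jmx by fastforce
    show ?thesis
    proof (rule ccontr)
      assume "\<not> (mn \<le> b \<and> b \<le> mx)"
      then consider "b > mx" | "b < mn" by linarith
      then show False
      proof cases
        case 1
        have a: "\<forall>j\<in>J. dl mx j \<le> \<delta> j"
        proof
          fix j assume j: "j \<in> J"
          show "dl mx j \<le> \<delta> j"
          proof (cases "p j = 0")
            case True then show ?thesis using dJ[OF j] j by (simp add: dl_def)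
          next
            case False
            then have jR: "j \<in> R" using j by (simp add: R_def)
            have "\<bar>p j\<bar> * \<bar>mx - r j\<bar> \<le> \<bar>p j\<bar> * \<bar>b - r j\<bar>"
              using lemx[OF jR] 1 by (intro mult_left_mono) auto
            then show ?thesis using dJ[OF j] j ar[OF jR] by (simp add: dl_def)
          qed
        qed
        have jJ: "jmx \<in> J" using jmx by (simp add: R_def)
        have "0 < \<bar>p jmx\<bar> * \<bar>b - r jmx\<bar>" using jmx 1 by (simp add: R_def)
        then have "dl mx jmx < \<delta> jmx" using dJ[OF jJ] ar[OF jmx(1)] jmx jJ by (simp add: dl_def)
        then have "idset J p q (dl mx) = {}" using min[of "dl mx"] a jJ by (force simp: dl_def)
        then show False using K2 by blast
      next
        case 2
        have a: "\<forall>j\<in>J. dl mn j \<le> \<delta> j"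
        proof
          fix j assume j: "j \<in> J"
          show "dl mn j \<le> \<delta> j"
          proof (cases "p j = 0")
            case True then show ?thesis using dJ[OF j] j by (simp add: dl_def)
          next
            case False
            then have jR: "j \<in> R" using j by (simp add: R_def)
            have "\<bar>p j\<bar> * \<bar>mn - r j\<bar> \<le> \<bar>p j\<bar> * \<bar>b - r j\<bar>"
              using gemn[OF jR] 2 by (intro mult_left_mono) auto
            then show ?thesis using dJ[OF j] j ar[OF jR] by (simp add: dl_def)
          qed
        qed
        have jJ: "jmn \<in> J" using jmn by (simp add: R_def)
        have "0 < \<bar>p jmn\<bar> * \<bar>b - r jmn\<bar>" using jmn 2 by (simp add: R_def)
        then have "dl mn jmn < \<delta> jmn" using dJ[OF jJ] ar[OF jmn(1)] jmn jJ by (simp add: dl_def)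
        then have "idset J p q (dl mn) = {}" using min[of "dl mn"] a jJ by (force simp: dl_def)
        then show False using K2 by blast
      qed
    qed
  qed
  have "FAS J p q = {mn..mx}"
  proof
    show "FAS J p q \<subseteq> {mn..mx}" unfolding FAS_def using K4 by auto
    show "{mn..mx} \<subseteq> FAS J p q"
    proof
      fix b assume "b \<in> {mn..mx}"
      then have "dl b \<in> fal_frontier J p q" using K3 by simp
      moreover have "b \<in> idset J p q (dl b)" by (rule K2)
      ultimately show "b \<in> FAS J p q" unfolding FAS_def by blast
    qed
  qed
  then show ?thesis by (simp add: mn_def mx_def r_def R_def)
qed


lemma sum_if_univ: "finite (UNIV::'k set) \<Longrightarrow> (\<Sum>s\<in>(UNIV::'k set). if s \<in> C then f s else 0) = (sum f C :: real)"
  by (simp add: sum.If_cases)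

context prob_space
begin

lemma fsm_multc: "finite_second_moment M V \<Longrightarrow> finite_second_moment M (\<lambda>\<omega>. V \<omega> * c)"
  using fsm_cmult[of V c] by (simp add: mult.commute)

lemma covar_multc_right: "covar M V (\<lambda>\<omega>. W \<omega> * c) = covar M V W * c"
  using covar_cmult_right[of V c W] by (simp add: mult.commute)

lemma covar_diff_right:
  assumes "finite_second_moment M V" "finite_second_moment M W1" "finite_second_moment M W2"
  shows "covar M V (\<lambda>\<omega>. W1 \<omega> - W2 \<omega>) = covar M V W1 - covar M V W2"
  using covar_add_right[OF assms(1,2) fsm_cmult[OF assms(3), of "-1"]] covar_cmult_right[of V "-1" W2]
  by simp

lemma covar_lincomb:
  assumes "finite S" "finite_second_moment M V" "\<And>s. s \<in> S \<Longrightarrow> finite_second_moment M (Z s)"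
  shows "covar M V (\<lambda>\<omega>. \<Sum>s\<in>S. Z s \<omega> * c s) = (\<Sum>s\<in>S. covar M V (Z s) * c s)"
  using covar_sum_right[OF assms(1,2), of "\<lambda>s \<omega>. Z s \<omega> * c s"] assms(3)
  by (simp add: fsm_multc covar_multc_right)

lemma fsm_Ztilde:
  assumes "\<And>i. finite_second_moment M (Z i)" "finite (UNIV :: 'k set)"
  shows "finite_second_moment M (Ztilde M (Z :: 'k \<Rightarrow> 'a \<Rightarrow> real) j)"
  unfolding Ztilde_def
  by (intro fsm_diff fsm_sum fsm_multc assms finite_subset[OF subset_UNIV assms(2)])

lemma covar_Ztilde:
  assumes Z: "\<And>i. finite_second_moment M (Z i)" and fin: "finite (UNIV :: 'k set)"
    and W: "finite_second_moment M W"
  shows "covar M (Ztilde M (Z :: 'k \<Rightarrow> 'a \<Rightarrow> real) (l, C)) W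
     = covar M (Z l) W - (\<Sum>s\<in>C. covar M (Z s) W * proj_coef M Z C l s)"
proof -
  have finC: "finite C" using finite_subset[OF subset_UNIV fin] .
  have "covar M (Ztilde M Z (l, C)) W = covar M W (Ztilde M Z (l, C))" by (rule covar_sym)
  also have "\<dots> = covar M W (Z l) - covar M W (\<lambda>\<omega>. \<Sum>s\<in>C. Z s \<omega> * proj_coef M Z C l s)"
    unfolding Ztilde_def fst_conv snd_conv
    by (intro covar_diff_right W Z fsm_sum fsm_multc finC)
  also have "\<dots> = covar M W (Z l) - (\<Sum>s\<in>C. covar M W (Z s) * proj_coef M Z C l s)"
    using covar_lincomb[OF finC W, of Z] Z by simp
  finally show ?thesis by (simp add: covar_sym)
qed

lemma proj_coef_normal:
  fixes Z :: "'k::finite \<Rightarrow> 'a \<Rightarrow> real"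
  assumes Z: "\<And>i. finite_second_moment M (Z i)"
    and inv: "invertible ((\<chi> i j. covar M (Z i) (Z j)) :: real^'k^'k)"
  shows "(\<forall>r\<in>C. (\<Sum>s\<in>C. covar M (Z r) (Z s) * proj_coef M Z C l s) = covar M (Z r) (Z l))
         \<and> (\<forall>s. s \<notin> C \<longrightarrow> proj_coef M Z C l s = 0)"
proof -
  define S where "S = ((\<chi> i j. covar M (Z i) (Z j)) :: real^'k^'k)"
  have finC: "finite C" by simp
  have uniq: "c = (\<lambda>_. 0)" if h1: "\<forall>r\<in>C. (\<Sum>s\<in>C. covar M (Z r) (Z s) * c s) = 0"
      and h2: "\<forall>s. s \<notin> C \<longrightarrow> c s = 0" for c
  proof -
    define W where "W = (\<lambda>\<omega>. \<Sum>s\<in>C. Z s \<omega> * c s)"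
    have fW: "finite_second_moment M W" unfolding W_def by (intro fsm_sum fsm_multc Z finC)
    have cW: "\<And>V. finite_second_moment M V \<Longrightarrow> covar M V W = (\<Sum>s\<in>C. covar M V (Z s) * c s)"
      unfolding W_def by (rule covar_lincomb[OF finC]) (use Z in auto)
    have "var M W = (\<Sum>s\<in>C. covar M W (Z s) * c s)" unfolding var_def by (rule cW[OF fW])
    also have "\<dots> = (\<Sum>s\<in>C. covar M (Z s) W * c s)" by (simp add: covar_sym)
    also have "\<dots> = (\<Sum>s\<in>C. 0 * c s)"
    proof (rule sum.cong[OF refl])
      fix s assume s: "s \<in> C"
      have "covar M (Z s) W = (\<Sum>t\<in>C. covar M (Z s) (Z t) * c t)" by (rule cW[OF Z])
      also have "\<dots> = 0" using h1 s by blast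
      finally show "covar M (Z s) W * c s = 0 * c s" by simp
    qed
    finally have v0: "var M W = 0" by simp
    have "S *v (\<chi> s. c s) = 0"
    proof (subst vec_eq_iff, intro allI)
      fix r
      have "(S *v (\<chi> s. c s)) $ r = (\<Sum>s\<in>UNIV. covar M (Z r) (Z s) * c s)"
        by (simp add: S_def matrix_vector_mult_def)
      also have "\<dots> = (\<Sum>s\<in>UNIV. if s \<in> C then covar M (Z r) (Z s) * c s else 0)"
        using h2 by (intro sum.cong) auto
      also have "\<dots> = (\<Sum>s\<in>C. covar M (Z r) (Z s) * c s)" by (rule sum_if_univ) simp
      also have "\<dots> = covar M (Z r) W" using cW[OF Z] by simp
      also have "\<dots> = 0" using var_zero_covar[OF fW Z v0] .
      finally show "(S *v (\<chi> s. c s)) $ r = 0 $ r" by simp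
    qed
    moreover have "\<forall>x. S *v x = 0 \<longrightarrow> x = 0"
      using inv unfolding S_def[symmetric] invertible_left_inverse matrix_left_invertible_ker .
    ultimately have "(\<chi> s. c s) = (0::real^'k)" by blast
    then show ?thesis by (simp add: vec_eq_iff fun_eq_iff)
  qed
  define P where "P = (\<lambda>c. (\<forall>r\<in>C. (\<Sum>s\<in>C. covar M (Z r) (Z s) * c s) = covar M (Z r) (Z l))
                             \<and> (\<forall>s. s \<notin> C \<longrightarrow> c s = 0))"
  define A where "A = ((\<chi> r s. if r \<in> C then (if s \<in> C then covar M (Z r) (Z s) else 0)
                                 else (if r = s then 1 else 0)) :: real^'k^'k)"
  have Acomp: "(A *v x) $ r = (if r \<in> C then (\<Sum>s\<in>C. covar M (Z r) (Z s) * x $ s) else x $ r)" for x r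
  proof (cases "r \<in> C")
    case True
    have "(A *v x) $ r = (\<Sum>s\<in>UNIV. A $ r $ s * x $ s)" by (simp add: matrix_vector_mult_def)
    also have "\<dots> = (\<Sum>s\<in>UNIV. if s \<in> C then covar M (Z r) (Z s) * x $ s else 0)"
      using True by (intro sum.cong) (auto simp: A_def)
    also have "\<dots> = (\<Sum>s\<in>C. covar M (Z r) (Z s) * x $ s)" by (rule sum_if_univ) simp
    finally show ?thesis using True by simp
  next
    case False
    have "(A *v x) $ r = (\<Sum>s\<in>UNIV. A $ r $ s * x $ s)" by (simp add: matrix_vector_mult_def)
    also have "\<dots> = (\<Sum>s\<in>UNIV. if s = r then x $ s else 0)"
      using False by (intro sum.cong) (auto simp: A_def)
    finally have "(A *v x) $ r = (\<Sum>s\<in>UNIV. if s = r then x $ s else 0)" .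
    then show ?thesis using False by simp
  qed
  have ker: "\<forall>x. A *v x = 0 \<longrightarrow> x = 0"
  proof (intro allI impI)
    fix x assume x0: "A *v x = 0"
    have "(\<lambda>s. x $ s) = (\<lambda>_. 0)"
    proof (rule uniq)
      show "\<forall>r\<in>C. (\<Sum>s\<in>C. covar M (Z r) (Z s) * x $ s) = 0"
        using x0 Acomp by (metis (no_types, lifting) zero_index)
      show "\<forall>s. s \<notin> C \<longrightarrow> x $ s = 0"
        using x0 Acomp by (metis (no_types, lifting) zero_index)
    qed
    then show "x = 0" by (simp add: vec_eq_iff fun_eq_iff)
  qed
  then have "invertible A" unfolding invertible_left_inverse matrix_left_invertible_ker[symmetric] .
  then have "surj (\<lambda>x. A *v x)" unfolding invertible_right_inverse matrix_right_invertible_surjective .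
  then obtain y where y: "A *v y = (\<chi> r. if r \<in> C then covar M (Z r) (Z l) else 0)" by (metis surjD)
  have Py: "P (\<lambda>s. y $ s)" unfolding P_def
  proof (intro conjI ballI allI impI)
    fix r assume r: "r \<in> C"
    show "(\<Sum>s\<in>C. covar M (Z r) (Z s) * y $ s) = covar M (Z r) (Z l)"
      using arg_cong[OF y, of "\<lambda>v. v $ r"] Acomp[of y r] r by simp
  next
    fix s assume s: "s \<notin> C"
    show "y $ s = 0" using arg_cong[OF y, of "\<lambda>v. v $ s"] Acomp[of y s] s by simp
  qed
  have ex1: "\<exists>!c. P c"
  proof (rule ex1I[where P=P, OF Py])
    fix c assume Pc: "P c"
    have "(\<lambda>s. c s - y $ s) = (\<lambda>_. 0)"
    proof (rule uniq)
      show "\<forall>r\<in>C. (\<Sum>s\<in>C. covar M (Z r) (Z s) * (c s - y $ s)) = 0"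
        using Pc Py unfolding P_def by (simp add: right_diff_distrib sum_subtractf)
      show "\<forall>s. s \<notin> C \<longrightarrow> c s - y $ s = 0" using Pc Py unfolding P_def by simp
    qed
    then show "c = (\<lambda>s. y $ s)" by (simp add: fun_eq_iff)
  qed
  have "P (proj_coef M Z C l)"
    unfolding proj_coef_def P_def[symmetric] by (rule theI'[OF ex1])
  then show ?thesis unfolding P_def .
qed

end
theorem proposition1:
  fixes M :: "'a measure"
    and Y X U :: "'a \<Rightarrow> real"
    and Z :: "'k::finite \<Rightarrow> 'a \<Rightarrow> real"
    and \<beta> :: real
    and \<gamma> \<alpha> :: "'k \<Rightarrow> real"
    and \<delta>t :: "'k \<times> 'k set \<Rightarrow> real"
  assumes prob: "prob_space M"
    and moments: "finite_second_moment M Y" "finite_second_moment M X"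
                 "finite_second_moment M U" "\<And>i. finite_second_moment M (Z i)"
    and model: "\<And>\<omega>. \<omega> \<in> space M \<Longrightarrow> Y \<omega> = X \<omega> * \<beta> + (\<Sum>i\<in>UNIV. Z i \<omega> * \<gamma> i) + U \<omega>"
    and alpha: "\<And>i. covar M (Z i) U = \<alpha> i"
    and relevance: "\<exists>i. covar M (Z i) X \<noteq> 0"
    and suff_var: "invertible ((\<chi> i j. covar M (Z i) (Z j)) :: real^'k^'k)"
    and invalid: "\<And>l. \<gamma> l * \<alpha> l = 0"
    and partial: "\<And>j. j \<in> spec_index \<Longrightarrow> 0 \<le> \<delta>t j"
                 "\<And>j. j \<in> spec_index \<Longrightarrow>
                    \<bar>covar M (Ztilde M Z j) (\<lambda>\<omega>. Y \<omega> - X \<omega> * \<beta>) / var M (Ztilde M Z j)\<bar> \<le> \<delta>t j"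
  shows "card (spec_index :: ('k \<times> 'k set) set) = CARD('k) * 2 ^ (CARD('k) - 1)
    \<and> FAS spec_index (pi_t M Z X) (psi_t M Z Y) =
        {Min ((\<lambda>j. psi_t M Z Y j / pi_t M Z X j) ` {j \<in> spec_index. pi_t M Z X j \<noteq> 0}) ..
         Max ((\<lambda>j. psi_t M Z Y j / pi_t M Z X j) ` {j \<in> spec_index. pi_t M Z X j \<noteq> 0})}
    \<and> ((\<exists>l. \<alpha> l = 0 \<and> \<gamma> l = 0
           \<and> covar M (Ztilde M Z (l, {r. r \<noteq> l \<and> \<gamma> r \<noteq> 0})) X \<noteq> 0)
       \<longrightarrow> \<beta> \<in> FAS spec_index (pi_t M Z X) (psi_t M Z Y))"
proof -
  interpret P: prob_space M by (rule prob)
  have finU: "finite (UNIV :: 'k set)" by simp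
  note Zf = moments(4)
  have sp: "(spec_index :: ('k \<times> 'k set) set) = Sigma UNIV (\<lambda>l. Pow (UNIV - {l}))"
    unfolding spec_index_def by auto
  have card1: "card (spec_index :: ('k \<times> 'k set) set) = CARD('k) * 2 ^ (CARD('k) - 1)"
    unfolding sp by (simp add: card_SigmaI card_Pow card_Diff_singleton)
  have varnz: "var M (Ztilde M Z j) \<noteq> 0" if "covar M (Ztilde M Z j) X \<noteq> 0" for j
  proof
    assume "var M (Ztilde M Z j) = 0"
    then have "covar M X (Ztilde M Z j) = 0"
      using P.var_zero_covar[OF P.fsm_Ztilde[where Z=Z, OF Zf finU] moments(2)] by blast
    then show False using that by (simp add: P.covar_sym)
  qed
  define R where "R = {j \<in> (spec_index :: ('k \<times> 'k set) set). pi_t M Z X j \<noteq> 0}"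
  obtain i where i: "covar M (Z i) X \<noteq> 0" using relevance by blast
  have zt0: "Ztilde M Z (i, {}) = Z i" by (simp add: Ztilde_def fun_eq_iff)
  have "(i, {}) \<in> R"
    unfolding R_def pi_t_def using i varnz[of "(i, {})"] by (simp add: spec_index_def zt0)
  then have Rne: "R \<noteq> {}" by blast
  have fas: "FAS spec_index (pi_t M Z X) (psi_t M Z Y) =
        {Min ((\<lambda>j. psi_t M Z Y j / pi_t M Z X j) ` R) .. Max ((\<lambda>j. psi_t M Z Y j / pi_t M Z X j) ` R)}"
    unfolding R_def by (rule FAS_char) (use Rne in \<open>auto simp: R_def\<close>)
  have part3: "\<beta> \<in> FAS spec_index (pi_t M Z X) (psi_t M Z Y)"
    if ex: "\<exists>l. \<alpha> l = 0 \<and> \<gamma> l = 0 \<and> covar M (Ztilde M Z (l, {r. r \<noteq> l \<and> \<gamma> r \<noteq> 0})) X \<noteq> 0"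
  proof -
    obtain l where l: "\<alpha> l = 0" "\<gamma> l = 0" "covar M (Ztilde M Z (l, {r. r \<noteq> l \<and> \<gamma> r \<noteq> 0})) X \<noteq> 0"
      using ex by blast
    define C where "C = {r. r \<noteq> l \<and> \<gamma> r \<noteq> 0}"
    define j where "j = (l, C)"
    define Zt where "Zt = Ztilde M Z j"
    have fZt: "finite_second_moment M Zt" unfolding Zt_def by (rule P.fsm_Ztilde[where Z=Z, OF Zf finU])
    have cX: "covar M Zt X \<noteq> 0" using l(3) by (simp add: Zt_def j_def C_def)
    have vZ: "var M Zt \<noteq> 0" using varnz cX by (simp add: Zt_def)
    have jsp: "j \<in> spec_index" by (auto simp: spec_index_def j_def C_def)
    have normal: "\<forall>r\<in>C. (\<Sum>s\<in>C. covar M (Z r) (Z s) * proj_coef M Z C l s) = covar M (Z r) (Z l)"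
      using P.proj_coef_normal[where Z=Z, OF Zf suff_var] by blast
    have cZ: "covar M Zt (Z i) * \<gamma> i = 0" for i
    proof (cases "\<gamma> i = 0")
      case False
      then have iC: "i \<in> C" using l(2) by (auto simp: C_def)
      have "covar M Zt (Z i) = covar M (Z l) (Z i) - (\<Sum>s\<in>C. covar M (Z s) (Z i) * proj_coef M Z C l s)"
        unfolding Zt_def j_def by (rule P.covar_Ztilde[where Z=Z, OF Zf finU Zf])
      also have "\<dots> = covar M (Z i) (Z l) - (\<Sum>s\<in>C. covar M (Z i) (Z s) * proj_coef M Z C l s)"
        by (simp add: P.covar_sym)
      also have "\<dots> = 0" using normal iC by simp
      finally show ?thesis by simp
    qed simp
    have cU: "covar M Zt U = 0"
    proof -
      have "covar M Zt U = covar M (Z l) U - (\<Sum>s\<in>C. covar M (Z s) U * proj_coef M Z C l s)"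
        unfolding Zt_def j_def by (rule P.covar_Ztilde[where Z=Z, OF Zf finU moments(3)])
      also have "\<dots> = 0"
      proof -
        have "\<And>s. s \<in> C \<Longrightarrow> covar M (Z s) U = 0"
          using invalid alpha by (auto simp: C_def)
        then show ?thesis using alpha l(1) by simp
      qed
      finally show ?thesis .
    qed
    have fX: "finite_second_moment M (\<lambda>\<omega>. X \<omega> * \<beta>)" by (rule P.fsm_multc[OF moments(2)])
    have fS: "finite_second_moment M (\<lambda>\<omega>. \<Sum>i\<in>UNIV. Z i \<omega> * \<gamma> i)"
      by (intro P.fsm_sum P.fsm_multc Zf finU)
    have "covar M Zt Y = covar M Zt (\<lambda>\<omega>. (X \<omega> * \<beta> + (\<Sum>i\<in>UNIV. Z i \<omega> * \<gamma> i)) + U \<omega>)"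
      using model by (intro P.covar_cong) simp
    also have "\<dots> = covar M Zt (\<lambda>\<omega>. X \<omega> * \<beta>) + covar M Zt (\<lambda>\<omega>. \<Sum>i\<in>UNIV. Z i \<omega> * \<gamma> i) + covar M Zt U"
      by (simp add: P.covar_add_right fZt fX fS moments(3) P.fsm_add)
    also have "\<dots> = covar M Zt X * \<beta>"
      using P.covar_lincomb[OF finU fZt, of Z \<gamma>] Zf cZ cU by (simp add: P.covar_multc_right)
    finally have cY: "covar M Zt Y = covar M Zt X * \<beta>" .
    have ratio: "psi_t M Z Y j / pi_t M Z X j = \<beta>"
      unfolding psi_t_def pi_t_def Zt_def[symmetric] cY using cX vZ by (simp add: Zt_def)
    have jR: "j \<in> R" unfolding R_def pi_t_def Zt_def[symmetric] using jsp cX vZ by (simp add: Zt_def)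
    have finR: "finite ((\<lambda>j. psi_t M Z Y j / pi_t M Z X j) ` R)" by simp
    have "\<beta> \<in> (\<lambda>j. psi_t M Z Y j / pi_t M Z X j) ` R" using jR ratio by force
    then show ?thesis unfolding fas using Min_le[OF finR] Max_ge[OF finR] by auto
  qed
  show ?thesis using card1 fas part3 unfolding R_def by blast
qed

end
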